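(* Let $0\to\mathfrak{r}\to\mathfrak{f}\to\mathfrak{g}\to0$ be a free presentation of a Leibniz algebra $\mathfrak{g}$. Then for every $\mathrm{Lie}$-stem extension $0\to\mathfrak{m}\to\mathfrak{p}\to\mathfrak{g}\to0$ of $\mathfrak{g}$, the Leibniz algebra $\mathfrak{p}$ is an epimorphic image of $\mathfrak{f}/[\mathfrak{f},\mathfrak{r}]_{\mathrm{Lie}}$.
   Context: Fix a field $\mathbb{K}$ with $\frac12\in\mathbb{K}$. A Leibniz algebra is a $\mathbb{K}$-vector space with a bilinear bracket satisfying $[x,[y,z]]=[[x,y],z]-[[x,z],y]$. $\mathfrak{p}^{\mathrm{ann}}$ is the span of all $[x,x]$, $\mathfrak{p}_{\mathrm{Lie}}=\mathfrak{p}/\mathfrak{p}^{\mathrm{ann}}$. $[\mathfrak{m},\mathfrak{n}]_{\mathrm{Lie}}$ is the span of all $[m,n]+[n,m]$. $Z_{\mathrm{Lie}}(\mathfrak{p})=\{z:[x,z]+[z,x]=0\ \forall x\}$. An extension $0\to\mathfrak{m}\to\mathfrak{p}\to\mathfrak{g}\to0$ is a $\mathrm{Lie}$-stem extension if $\mathfrak{m}\subseteq Z_{\mathrm{Lie}}(\mathfrak{p})$ and the induced map $\mathfrak{p}_{\mathrm{Lie}}\to\mathfrak{g}_{\mathrm{Lie}}$ is an isomorphism. A free presentation is a short exact sequence $0\to\mathfrak{r}\to\mathfrak{f}\to\mathfrak{g}\to0$ with $\mathfrak{f}$ a free Leibniz algebra. *)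

theory Defs
  imports Complex_Main
begin

definition leibniz_algebra ::
  "('k::field \<Rightarrow> 'a::ab_group_add \<Rightarrow> 'a) \<Rightarrow> ('a \<Rightarrow> 'a \<Rightarrow> 'a) \<Rightarrow> bool" where
  "leibniz_algebra s br \<longleftrightarrow>
     vector_space s \<and>
     (\<forall>x y z. br (x + y) z = br x z + br y z) \<and>
     (\<forall>x y z. br x (y + z) = br x y + br x z) \<and>
     (\<forall>c x y. br (s c x) y = s c (br x y)) \<and>
     (\<forall>c x y. br x (s c y) = s c (br x y)) \<and>
     (\<forall>x y z. br x (br y z) = br (br x y) z - br (br x z) y)"

definition leibniz_hom ::
  "('k::field \<Rightarrow> 'a::ab_group_add \<Rightarrow> 'a) \<Rightarrow> ('a \<Rightarrow> 'a \<Rightarrow> 'a) \<Rightarrow>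
   ('k \<Rightarrow> 'b::ab_group_add \<Rightarrow> 'b) \<Rightarrow> ('b \<Rightarrow> 'b \<Rightarrow> 'b) \<Rightarrow> ('a \<Rightarrow> 'b) \<Rightarrow> bool" where
  "leibniz_hom s1 b1 s2 b2 h \<longleftrightarrow>
     Vector_Spaces.linear s1 s2 h \<and> (\<forall>x y. h (b1 x y) = b2 (h x) (h y))"

definition ann :: "('k::field \<Rightarrow> 'a::ab_group_add \<Rightarrow> 'a) \<Rightarrow> ('a \<Rightarrow> 'a \<Rightarrow> 'a) \<Rightarrow> 'a set" where
  "ann s br = module.span s {br x x | x. True}"

definition lie_bracket_span ::
  "('k::field \<Rightarrow> 'a::ab_group_add \<Rightarrow> 'a) \<Rightarrow> ('a \<Rightarrow> 'a \<Rightarrow> 'a) \<Rightarrow> 'a set \<Rightarrow> 'a set \<Rightarrow> 'a set" where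
  "lie_bracket_span s br M N = module.span s {br m n + br n m | m n. m \<in> M \<and> n \<in> N}"

definition Z_Lie :: "('a::ab_group_add \<Rightarrow> 'a \<Rightarrow> 'a) \<Rightarrow> 'a set" where
  "Z_Lie br = {z. \<forall>x. br x z + br z x = 0}"

text \<open>Lie-stem extension 0 -> ker proj -> p -> g -> 0 given by a surjective
homomorphism proj : p -> g with m = ker proj, such that m is contained in Z_Lie(p) and
the induced map p/p^ann -> g/g^ann, [x] |-> [proj x], is an isomorphism
(i.e. injective and surjective; it is automatically well defined and linear).\<close>
definition lie_stem_extension ::
  "('k::field \<Rightarrow> 'p::ab_group_add \<Rightarrow> 'p) \<Rightarrow> ('p \<Rightarrow> 'p \<Rightarrow> 'p) \<Rightarrow>
   ('k \<Rightarrow> 'g::ab_group_add \<Rightarrow> 'g) \<Rightarrow> ('g \<Rightarrow> 'g \<Rightarrow> 'g) \<Rightarrow> ('p \<Rightarrow> 'g) \<Rightarrow> bool" where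
  "lie_stem_extension sp bp sg bg proj \<longleftrightarrow>
     leibniz_algebra sp bp \<and> leibniz_algebra sg bg \<and>
     leibniz_hom sp bp sg bg proj \<and> surj proj \<and>
     {x. proj x = 0} \<subseteq> Z_Lie bp \<and>
     (\<forall>x. proj x \<in> ann sg bg \<longrightarrow> x \<in> ann sp bp) \<and>
     (\<forall>y. \<exists>x. y - proj x \<in> ann sg bg)"

text \<open>HOL cannot quantify over types inside a definition, so the
universal property is stated for all Leibniz algebras (over the same field)
whose underlying type is 'c, which is passed as a parameter.\<close>
definition free_leibniz_on ::
  "'c::ab_group_add itself \<Rightarrow> ('k::field \<Rightarrow> 'a::ab_group_add \<Rightarrow> 'a) \<Rightarrow> ('a \<Rightarrow> 'a \<Rightarrow> 'a) \<Rightarrow>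
   'a set \<Rightarrow> bool" where
  "free_leibniz_on (T :: 'c itself) s br X \<longleftrightarrow>
     leibniz_algebra s br \<and>
     (\<forall>(sl :: 'k \<Rightarrow> 'c \<Rightarrow> 'c) bl. leibniz_algebra sl bl \<longrightarrow>
        (\<forall>h :: 'a \<Rightarrow> 'c. \<exists>!\<phi>. leibniz_hom s br sl bl \<phi> \<and> (\<forall>x\<in>X. \<phi> x = h x)))"

end

theory Submission
  imports Defs
begin

lemma lin_mh: "Vector_Spaces.linear s1 s2 f \<Longrightarrow> module_hom s1 s2 f"
  by (simp add: module_hom_iff_linear)

lemma lin_add: "Vector_Spaces.linear s1 s2 f \<Longrightarrow> f (x + y) = f x + f y"
  using lin_mh module_hom.add by metis
lemma lin_scale: "Vector_Spaces.linear s1 s2 f \<Longrightarrow> f (s1 c x) = s2 c (f x)"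
  using lin_mh module_hom.scale by metis
lemma lin_diff: "Vector_Spaces.linear s1 s2 f \<Longrightarrow> f (x - y) = f x - f y"
  using lin_mh module_hom.diff by metis
lemma lin_zero: "Vector_Spaces.linear s1 s2 f \<Longrightarrow> f 0 = 0"
  using lin_mh module_hom.zero by metis

lemma la_vs: "leibniz_algebra s br \<Longrightarrow> vector_space s"
  by (simp add: leibniz_algebra_def)
lemma la_mod: "leibniz_algebra s br \<Longrightarrow> module s"
  by (simp add: leibniz_algebra_def module_iff_vector_space)

lemma la_right_diff:
  assumes "leibniz_algebra s br" shows "br x (y - z) = br x y - br x z"
proof -
  have "br x (y - z) + br x z = br x y"
    using assms unfolding leibniz_algebra_def by (metis diff_add_cancel)
  thus ?thesis by (metis add_diff_cancel)
qed

lemma la_left_zero: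
  assumes "leibniz_algebra s br" shows "br 0 y = 0"
proof -
  have "br (0+0) y = br 0 y + br 0 y" using assms unfolding leibniz_algebra_def by blast
  thus ?thesis by simp
qed

lemma la_right_zero:
  assumes "leibniz_algebra s br" shows "br y 0 = 0"
proof -
  have "br y (0+0) = br y 0 + br y 0" using assms unfolding leibniz_algebra_def by blast
  thus ?thesis by simp
qed

lemma la_sq_right:
  assumes "leibniz_algebra s br" shows "br x (br y y) = 0"
  using assms unfolding leibniz_algebra_def by simp

lemma la_ann_right:
  assumes la: "leibniz_algebra s br" and a: "a \<in> ann s br" shows "br x a = 0"
proof -
  interpret module s using la_mod[OF la] .
  from a have "a \<in> span {br x x | x. True}" by (simp add: ann_def)
  thus ?thesis
  proof (induction rule: span_induct_alt)
    case base show ?case using la_right_zero[OF la] .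
  next
    case (step c u y)
    then obtain z where "u = br z z" by blast
    hence "br x u = 0" using la_sq_right[OF la] by simp
    thus ?case using la step unfolding leibniz_algebra_def by simp
  qed
qed

theorem mainTheorem16:
  fixes sf :: "'k::field \<Rightarrow> 'f::ab_group_add \<Rightarrow> 'f" and bf :: "'f \<Rightarrow> 'f \<Rightarrow> 'f"
    and sg :: "'k \<Rightarrow> 'g::ab_group_add \<Rightarrow> 'g" and bg :: "'g \<Rightarrow> 'g \<Rightarrow> 'g"
    and sp :: "'k \<Rightarrow> 'p::ab_group_add \<Rightarrow> 'p" and bp :: "'p \<Rightarrow> 'p \<Rightarrow> 'p"
    and X :: "'f set" and rho :: "'f \<Rightarrow> 'g" and proj :: "'p \<Rightarrow> 'g"
  assumes half: "(2::'k) \<noteq> 0"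
    and free: "free_leibniz_on TYPE('p) sf bf X"
    and g_alg: "leibniz_algebra sg bg"
    and rho_hom: "leibniz_hom sf bf sg bg rho" and rho_surj: "surj rho"
    and stem: "lie_stem_extension sp bp sg bg proj"
  shows "\<exists>\<phi>. leibniz_hom sf bf sp bp \<phi> \<and> surj \<phi> \<and>
           lie_bracket_span sf bf UNIV {x. rho x = 0} \<subseteq> {x. \<phi> x = 0}"
proof -
  have p_alg: "leibniz_algebra sp bp" and proj_hom: "leibniz_hom sp bp sg bg proj"
    and proj_surj: "surj proj" and kerZ: "{x. proj x = 0} \<subseteq> Z_Lie bp"
    and annc: "\<forall>x. proj x \<in> ann sg bg \<longrightarrow> x \<in> ann sp bp"
    using stem unfolding lie_stem_extension_def by auto
  have f_alg: "leibniz_algebra sf bf" and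
    univ: "\<And>(sl :: 'k \<Rightarrow> 'p \<Rightarrow> 'p) bl h. leibniz_algebra sl bl \<Longrightarrow>
        \<exists>!\<phi>. leibniz_hom sf bf sl bl \<phi> \<and> (\<forall>x\<in>X. \<phi> x = h x)"
    using free unfolding free_leibniz_on_def by auto
  have proj_lin: "Vector_Spaces.linear sp sg proj" using proj_hom by (simp add: leibniz_hom_def)
  have rho_lin: "Vector_Spaces.linear sf sg rho" using rho_hom by (simp add: leibniz_hom_def)
  have vsp: "vector_space_pair sp sg"
    using la_vs[OF p_alg] la_vs[OF g_alg] by (simp add: vector_space_pair_def)
  obtain s where s_lin: "Vector_Spaces.linear sg sp s" and ps: "proj \<circ> s = id"
    using vector_space_pair.linear_surjective_right_inverse[OF vsp proj_lin proj_surj] by blast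
  have ps': "\<And>u. proj (s u) = u" using ps by (simp add: fun_eq_iff)
  define b2 where "b2 = (\<lambda>x y. s (bg (proj x) (proj y)))"
  have b2_alg: "leibniz_algebra sp b2"
    using la_vs[OF p_alg] g_alg
    unfolding leibniz_algebra_def b2_def
    by (simp add: lin_add[OF s_lin] lin_add[OF proj_lin] lin_scale[OF s_lin]
        lin_scale[OF proj_lin] lin_diff[OF s_lin] ps')
  have s_hom: "leibniz_hom sg bg sp b2 s"
    unfolding leibniz_hom_def b2_def using s_lin ps' by simp
  define h where "h = (\<lambda>x. SOME y. proj y = rho x)"
  have h: "\<And>x. proj (h x) = rho x" unfolding h_def
    using proj_surj by (metis (mono_tags) surj_def someI_ex)
  obtain \<phi> where phi_hom: "leibniz_hom sf bf sp bp \<phi>" and phiX: "\<forall>x\<in>X. \<phi> x = h x"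
    using univ[OF p_alg, of h] by blast
  have phi_lin: "Vector_Spaces.linear sf sp \<phi>" using phi_hom by (simp add: leibniz_hom_def)
  have comp_hom: "\<And>s1 b1 s2 b2' s3 b3 (f1::'x::ab_group_add\<Rightarrow>'y::ab_group_add) (f2::'y\<Rightarrow>'z::ab_group_add).
      leibniz_hom s1 b1 s2 b2' f1 \<Longrightarrow> leibniz_hom s2 b2' s3 b3 f2 \<Longrightarrow> leibniz_hom s1 b1 s3 b3 (f2 \<circ> f1)"
    unfolding leibniz_hom_def by (auto intro: Vector_Spaces.linear_compose)
  have A: "leibniz_hom sf bf sp b2 (s \<circ> rho)" by (rule comp_hom[OF rho_hom s_hom])
  have B: "leibniz_hom sf bf sp b2 (s \<circ> (proj \<circ> \<phi>))"
    by (rule comp_hom[OF comp_hom[OF phi_hom proj_hom] s_hom])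
  have eq: "s \<circ> rho = s \<circ> (proj \<circ> \<phi>)"
    using univ[OF b2_alg, of "s \<circ> rho"] A B phiX h by auto
  have pphi: "\<And>x. proj (\<phi> x) = rho x"
    using eq ps' by (metis comp_apply)
  have phi_add: "\<And>x y. \<phi> (bf x y) = bp (\<phi> x) (\<phi> y)" using phi_hom by (simp add: leibniz_hom_def)
  have kerR: "\<And>a x. proj a = 0 \<Longrightarrow> bp x a = 0"
  proof -
    fix a x assume "proj a = 0"
    have "0 \<in> ann sg bg"
      using la_mod[OF g_alg] by (simp add: ann_def module.span_zero)
    hence "a \<in> ann sp bp" using annc \<open>proj a = 0\<close> by metis
    thus "bp x a = 0" by (rule la_ann_right[OF p_alg])
  qed
  have kerL: "\<And>a x. proj a = 0 \<Longrightarrow> bp a x = 0"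
  proof -
    fix a x assume pa: "proj a = 0"
    hence "a \<in> Z_Lie bp" using kerZ by blast
    hence "bp x a + bp a x = 0" by (simp add: Z_Lie_def)
    thus "bp a x = 0" using kerR[OF pa] by simp
  qed
  have decomp: "\<And>y. \<exists>u. proj (y - \<phi> u) = 0"
  proof -
    fix y obtain u where "rho u = proj y" using rho_surj by (metis surj_def)
    hence "proj (y - \<phi> u) = 0" using pphi lin_diff[OF proj_lin] by simp
    thus "\<exists>u. proj (y - \<phi> u) = 0" by blast
  qed
  interpret mp: module sp using la_mod[OF p_alg] .
  interpret mf: module sf using la_mod[OF f_alg] .
  have sub_range: "mp.subspace (range \<phi>)"
    using module_hom.subspace_image[OF lin_mh[OF phi_lin] mf.subspace_UNIV] .
  have sq: "\<And>y. bp y y \<in> range \<phi>"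
  proof -
    fix y obtain u where pu: "proj (y - \<phi> u) = 0" using decomp by blast
    define a where "a = y - \<phi> u"
    have y: "y = \<phi> u + a" by (simp add: a_def)
    have "bp y y = bp (\<phi> u) (\<phi> u) + bp (\<phi> u) a + (bp a (\<phi> u) + bp a a)"
      using p_alg unfolding y leibniz_algebra_def by simp
    also have "\<dots> = bp (\<phi> u) (\<phi> u)" using kerR kerL pu a_def by simp
    also have "\<dots> = \<phi> (bf u u)" by (simp add: phi_add)
    finally show "bp y y \<in> range \<phi>" by simp
  qed
  have ann_sub: "ann sp bp \<subseteq> range \<phi>"
    unfolding ann_def using sq by (intro mp.span_minimal[OF _ sub_range]) auto
  have surj_phi: "surj \<phi>"
  proof -
    { fix y obtain u where pu: "proj (y - \<phi> u) = 0" using decomp by blast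
      have "0 \<in> ann sg bg"
        using la_mod[OF g_alg] by (simp add: ann_def module.span_zero)
      hence "y - \<phi> u \<in> range \<phi>" using annc pu ann_sub by (metis subsetD)
      hence "y - \<phi> u + \<phi> u \<in> range \<phi>"
        using mp.subspace_add[OF sub_range] by blast
      hence "y \<in> range \<phi>" by simp }
    thus ?thesis by blast
  qed
  have ker_sub: "mf.subspace {x. \<phi> x = 0}"
    using module_hom.subspace_kernel[OF lin_mh[OF phi_lin]] .
  have gens: "{bf m n + bf n m | m n. m \<in> (UNIV::'f set) \<and> n \<in> {x. rho x = 0}} \<subseteq> {x. \<phi> x = 0}"
  proof
    fix z assume "z \<in> {bf m n + bf n m | m n. m \<in> (UNIV::'f set) \<and> n \<in> {x. rho x = 0}}"
    then obtain m n where z: "z = bf m n + bf n m" and rn: "rho n = 0" by blast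
    have "proj (\<phi> n) = 0" using pphi rn by simp
    hence "\<phi> n \<in> Z_Lie bp" using kerZ by blast
    hence "bp (\<phi> m) (\<phi> n) + bp (\<phi> n) (\<phi> m) = 0" by (simp add: Z_Lie_def)
    thus "z \<in> {x. \<phi> x = 0}" using z lin_add[OF phi_lin] phi_add by simp
  qed
  have "lie_bracket_span sf bf UNIV {x. rho x = 0} \<subseteq> {x. \<phi> x = 0}"
    unfolding lie_bracket_span_def by (rule mf.span_minimal[OF gens ker_sub])
  thus ?thesis using phi_hom surj_phi by blast
qed

end
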